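(* Let $X$ be a set with a prebornology $\mathcal{B}$, and let $\mathcal{C}_1,\mathcal{C}_2$ be coarse structures on $X$ whose induced prebornologies both equal $\mathcal{B}$. Then the coarse structures $\exp\mathcal{C}_1$ and $\exp\mathcal{C}_2$, restricted to $\flat(X)=\mathcal{B}\setminus\{\varnothing\}$, induce the same prebornology on $\flat(X)$.
   Context: A coarse structure on $X$ is a family of subsets of $X\times X$ containing the diagonal, closed under subsets, finite unions, inverses and compositions; its induced prebornology is $\{B\subseteq X: B\times B\in\mathcal{C}\}$. For $E\subseteq X\times X$, $\exp E=\{(A,B)\in\mathcal{P}(X)^2: A\subseteq E[B]\text{ and }B\subseteq E[A]\}$, and $\exp\mathcal{C}$ is the coarse structure on $\mathcal{P}(X)$ generated by $\{\exp E: E\in\mathcal{C}\}$; its restriction to $\flat(X)$ is $\{E'\cap(\flat(X)\times\flat(X)):E'\in\exp\mathcal{C}\}$, and the induced prebornology on $\flat(X)$ consists of $\mathcal{S}\subseteq\flat(X)$ with $\mathcal{S}\times\mathcal{S}$ in that restricted structure. *)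

theory Defs
  imports Main
begin

definition coarse_structure :: "'a set \<Rightarrow> ('a \<times> 'a) set set \<Rightarrow> bool" where
  "coarse_structure X C \<longleftrightarrow>
     (\<forall>E\<in>C. E \<subseteq> X \<times> X) \<and> Id_on X \<in> C \<and>
     (\<forall>E\<in>C. \<forall>F. F \<subseteq> E \<longrightarrow> F \<in> C) \<and>
     (\<forall>E\<in>C. \<forall>F\<in>C. E \<union> F \<in> C) \<and>
     (\<forall>E\<in>C. E\<inverse> \<in> C) \<and>
     (\<forall>E\<in>C. \<forall>F\<in>C. E O F \<in> C)"

definition prebornology :: "'a set \<Rightarrow> 'a set set \<Rightarrow> bool" where
  "prebornology X B \<longleftrightarrow>
     (\<forall>A\<in>B. A \<subseteq> X) \<and> (\<forall>A\<in>B. \<forall>A'. A' \<subseteq> A \<longrightarrow> A' \<in> B) \<and> (\<forall>x\<in>X. {x} \<in> B)"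

definition induced_prebornology :: "'a set \<Rightarrow> ('a \<times> 'a) set set \<Rightarrow> 'a set set" where
  "induced_prebornology X C = {B. B \<subseteq> X \<and> B \<times> B \<in> C}"

definition generated_coarse :: "'a set \<Rightarrow> ('a \<times> 'a) set set \<Rightarrow> ('a \<times> 'a) set set" where
  "generated_coarse Y G = \<Inter>{C. coarse_structure Y C \<and> G \<subseteq> C}"

definition exp_ent :: "'a set \<Rightarrow> ('a \<times> 'a) set \<Rightarrow> ('a set \<times> 'a set) set" where
  "exp_ent X E = {(A, B). A \<subseteq> X \<and> B \<subseteq> X \<and> A \<subseteq> E `` B \<and> B \<subseteq> E `` A}"

definition exp_coarse :: "'a set \<Rightarrow> ('a \<times> 'a) set set \<Rightarrow> ('a set \<times> 'a set) set set" where
  "exp_coarse X C = generated_coarse (Pow X) (exp_ent X ` C)"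

definition flat :: "'a set set \<Rightarrow> 'a set set" where
  "flat B = B - {{}}"

definition restrict_coarse :: "'b set \<Rightarrow> ('b \<times> 'b) set set \<Rightarrow> ('b \<times> 'b) set set" where
  "restrict_coarse Y C = {E \<inter> (Y \<times> Y) | E. E \<in> C}"

end

theory Submission
  imports Defs
begin

lemma exp_ent_mono: "E \<subseteq> F \<Longrightarrow> exp_ent X E \<subseteq> exp_ent X F"
  unfolding exp_ent_def using Image_mono[of E F] by blast

lemma exp_coarse_char:
  assumes cs: "coarse_structure X C"
  shows "exp_coarse X C = {F. \<exists>E\<in>C. F \<subseteq> exp_ent X E}"
proof -
  let ?D = "{F. \<exists>E\<in>C. F \<subseteq> exp_ent X E}"
  have gen: "exp_ent X ` C \<subseteq> ?D" by auto
  have csD: "coarse_structure (Pow X) ?D"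
    unfolding coarse_structure_def
  proof (intro conjI ballI allI impI)
    fix F assume "F \<in> ?D" then show "F \<subseteq> Pow X \<times> Pow X"
      unfolding exp_ent_def by auto
  next
    have "Id_on X \<in> C" using cs unfolding coarse_structure_def by auto
    moreover have "Id_on (Pow X) \<subseteq> exp_ent X (Id_on X)"
      unfolding exp_ent_def by (auto simp: Id_on_def)
    ultimately show "Id_on (Pow X) \<in> ?D" by blast
  next
    fix E F assume "E \<in> ?D" "F \<subseteq> E" then show "F \<in> ?D" by blast
  next
    fix E F assume "E \<in> ?D" "F \<in> ?D"
    then obtain E1 F1 where "E1 \<in> C" "F1 \<in> C" "E \<subseteq> exp_ent X E1" "F \<subseteq> exp_ent X F1" by blast
    moreover have "E1 \<union> F1 \<in> C" using cs \<open>E1 \<in> C\<close> \<open>F1 \<in> C\<close> unfolding coarse_structure_def by auto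
    moreover have "exp_ent X E1 \<union> exp_ent X F1 \<subseteq> exp_ent X (E1 \<union> F1)"
      using exp_ent_mono[of E1 "E1 \<union> F1" X] exp_ent_mono[of F1 "E1 \<union> F1" X] by auto
    ultimately show "E \<union> F \<in> ?D" by blast
  next
    fix E assume "E \<in> ?D"
    then obtain E1 where "E1 \<in> C" "E \<subseteq> exp_ent X E1" by blast
    moreover have "(exp_ent X E1)\<inverse> \<subseteq> exp_ent X E1" unfolding exp_ent_def by auto
    ultimately show "E\<inverse> \<in> ?D" by blast
  next
    fix E F assume "E \<in> ?D" "F \<in> ?D"
    then obtain E1 F1 where h: "E1 \<in> C" "F1 \<in> C" "E \<subseteq> exp_ent X E1" "F \<subseteq> exp_ent X F1" by blast
    have G: "E1 O F1 \<union> F1 O E1 \<in> C" using cs h(1,2) unfolding coarse_structure_def by auto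
    have "exp_ent X E1 O exp_ent X F1 \<subseteq> exp_ent X (E1 O F1 \<union> F1 O E1)"
    proof
      fix p assume "p \<in> exp_ent X E1 O exp_ent X F1"
      then obtain A B' D where p: "p = (A, D)" "(A, B') \<in> exp_ent X E1" "(B', D) \<in> exp_ent X F1" by blast
      have "A \<subseteq> E1 `` B'" "B' \<subseteq> E1 `` A" "B' \<subseteq> F1 `` D" "D \<subseteq> F1 `` B'"
        "A \<subseteq> X" "D \<subseteq> X"
        using p unfolding exp_ent_def by auto
      then have "A \<subseteq> E1 `` (F1 `` D)" "D \<subseteq> F1 `` (E1 `` A)"
        by (meson Image_mono order_trans order_refl)+
      then have "A \<subseteq> (F1 O E1) `` D" "D \<subseteq> (E1 O F1) `` A"
        by (simp_all add: relcomp_Image)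
      then show "p \<in> exp_ent X (E1 O F1 \<union> F1 O E1)"
        using p \<open>A \<subseteq> X\<close> \<open>D \<subseteq> X\<close> unfolding exp_ent_def by blast
    qed
    then have "E O F \<subseteq> exp_ent X (E1 O F1 \<union> F1 O E1)" using h(3,4) by blast
    then show "E O F \<in> ?D" using G by blast
  qed
  show ?thesis
  proof
    show "exp_coarse X C \<subseteq> ?D"
      unfolding exp_coarse_def generated_coarse_def using csD gen by blast
  next
    show "?D \<subseteq> exp_coarse X C"
      unfolding exp_coarse_def generated_coarse_def
    proof (intro subsetI InterI)
      fix F C' assume F: "F \<in> ?D" and C': "C' \<in> {C'. coarse_structure (Pow X) C' \<and> exp_ent X ` C \<subseteq> C'}"
      then obtain E where "E \<in> C" "F \<subseteq> exp_ent X E" by blast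
      moreover have "exp_ent X E \<in> C'" using C' \<open>E \<in> C\<close> by blast
      moreover have "\<forall>E\<in>C'. \<forall>F. F \<subseteq> E \<longrightarrow> F \<in> C'"
        using C' unfolding coarse_structure_def by simp
      ultimately show "F \<in> C'" by blast
    qed
  qed
qed

lemma key:
  assumes pb: "prebornology X B" and cs: "coarse_structure X C"
    and ib: "induced_prebornology X C = B"
  shows "induced_prebornology (flat B) (restrict_coarse (flat B) (exp_coarse X C))
       = {S. S \<subseteq> flat B \<and> (S = {} \<or> \<Union>S \<in> B)}"
proof -
  have BC: "K \<in> B \<longleftrightarrow> K \<subseteq> X \<and> K \<times> K \<in> C" for K
    unfolding ib[symmetric] induced_prebornology_def by simp
  have sub: "\<And>E F. E \<in> C \<Longrightarrow> F \<subseteq> E \<Longrightarrow> F \<in> C"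
    and inv: "\<And>E. E \<in> C \<Longrightarrow> E\<inverse> \<in> C"
    and comp: "\<And>E F. E \<in> C \<Longrightarrow> F \<in> C \<Longrightarrow> E O F \<in> C"
    and inX: "\<And>E. E \<in> C \<Longrightarrow> E \<subseteq> X \<times> X"
  proof -
    have c: "\<forall>E\<in>C. E \<subseteq> X \<times> X" "\<forall>E\<in>C. \<forall>F. F \<subseteq> E \<longrightarrow> F \<in> C"
      "\<forall>E\<in>C. E\<inverse> \<in> C" "\<forall>E\<in>C. \<forall>F\<in>C. E O F \<in> C"
      using cs unfolding coarse_structure_def by simp_all
    show "\<And>E F. E \<in> C \<Longrightarrow> F \<subseteq> E \<Longrightarrow> F \<in> C" using c(2) by blast
    show "\<And>E. E \<in> C \<Longrightarrow> E\<inverse> \<in> C" using c(3) by blast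
    show "\<And>E F. E \<in> C \<Longrightarrow> F \<in> C \<Longrightarrow> E O F \<in> C" using c(4) by blast
    show "\<And>E. E \<in> C \<Longrightarrow> E \<subseteq> X \<times> X" using c(1) by blast
  qed
  have psub: "\<And>A A'. A \<in> B \<Longrightarrow> A' \<subseteq> A \<Longrightarrow> A' \<in> B"
  proof -
    have "\<forall>A\<in>B. \<forall>A'. A' \<subseteq> A \<longrightarrow> A' \<in> B" using pb unfolding prebornology_def by simp
    then show "\<And>A A'. A \<in> B \<Longrightarrow> A' \<subseteq> A \<Longrightarrow> A' \<in> B" by blast
  qed
  have eq: "S \<times> S \<in> restrict_coarse (flat B) (exp_coarse X C) \<longleftrightarrow> (\<exists>E\<in>C. S \<times> S \<subseteq> exp_ent X E)"
    if S: "S \<subseteq> flat B" for S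
  proof
    assume "S \<times> S \<in> restrict_coarse (flat B) (exp_coarse X C)"
    then obtain E' where E': "S \<times> S = E' \<inter> (flat B \<times> flat B)" "E' \<in> exp_coarse X C"
      unfolding restrict_coarse_def by blast
    then obtain E where "E \<in> C" "E' \<subseteq> exp_ent X E"
      unfolding exp_coarse_char[OF cs] by blast
    moreover have "S \<times> S \<subseteq> E'" using E'(1) by (metis Int_lower1)
    ultimately show "\<exists>E\<in>C. S \<times> S \<subseteq> exp_ent X E" by blast
  next
    assume "\<exists>E\<in>C. S \<times> S \<subseteq> exp_ent X E"
    then have "S \<times> S \<in> exp_coarse X C" unfolding exp_coarse_char[OF cs] by blast
    moreover have "S \<times> S = (S \<times> S) \<inter> (flat B \<times> flat B)" using S by blast
    ultimately show "S \<times> S \<in> restrict_coarse (flat B) (exp_coarse X C)"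
      unfolding restrict_coarse_def by (intro CollectI exI conjI)
  qed
  have main: "(\<exists>E\<in>C. S \<times> S \<subseteq> exp_ent X E) \<longleftrightarrow> (S = {} \<or> \<Union>S \<in> B)"
    if S: "S \<subseteq> flat B" for S
  proof
    assume "\<exists>E\<in>C. S \<times> S \<subseteq> exp_ent X E"
    then obtain E where E: "E \<in> C" "S \<times> S \<subseteq> exp_ent X E" by blast
    show "S = {} \<or> \<Union>S \<in> B"
    proof (cases "S = {}")
      case False
      then obtain A0 where A0: "A0 \<in> S" by blast
      then have "A0 \<in> B" using S unfolding flat_def by blast
      then have A0C: "A0 \<times> A0 \<in> C" "A0 \<subseteq> X" using BC by auto
      have U: "\<Union>S \<subseteq> E `` A0"
      proof
        fix x assume "x \<in> \<Union>S"
        then obtain A where "A \<in> S" "x \<in> A" by blast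
        then have "(A, A0) \<in> exp_ent X E" using E A0 by blast
        then show "x \<in> E `` A0" using \<open>x \<in> A\<close> unfolding exp_ent_def by blast
      qed
      have "E `` A0 \<times> E `` A0 \<subseteq> E\<inverse> O (A0 \<times> A0) O E"
      proof (rule subsetI)
        fix p assume "p \<in> E `` A0 \<times> E `` A0"
        then obtain x y a b where "p = (x, y)" "a \<in> A0" "b \<in> A0" "(a, x) \<in> E" "(b, y) \<in> E"
          by blast
        then show "p \<in> E\<inverse> O (A0 \<times> A0) O E" by blast
      qed
      moreover have "E\<inverse> O (A0 \<times> A0) O E \<in> C" using comp inv E(1) A0C(1) by blast
      ultimately have "E `` A0 \<times> E `` A0 \<in> C" using sub by blast
      moreover have "E `` A0 \<subseteq> X" using inX[OF E(1)] by blast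
      ultimately have "E `` A0 \<in> B" using BC by blast
      then show ?thesis using U psub by blast
    qed simp
  next
    assume h: "S = {} \<or> \<Union>S \<in> B"
    show "\<exists>E\<in>C. S \<times> S \<subseteq> exp_ent X E"
    proof (cases "S = {}")
      case True
      have "Id_on X \<in> C" using cs unfolding coarse_structure_def by blast
      then show ?thesis using True by blast
    next
      case False
      then have U: "\<Union>S \<in> B" using h by blast
      then have "\<Union>S \<times> \<Union>S \<in> C" "\<Union>S \<subseteq> X" using BC by auto
      moreover have "S \<times> S \<subseteq> exp_ent X (\<Union>S \<times> \<Union>S)"
      proof
        fix p assume "p \<in> S \<times> S"
        then obtain A A' where p: "p = (A, A')" "A \<in> S" "A' \<in> S" by blast
        have "A \<noteq> {}" "A' \<noteq> {}" using p S unfolding flat_def by auto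
        then show "p \<in> exp_ent X (\<Union>S \<times> \<Union>S)"
          using p \<open>\<Union>S \<subseteq> X\<close> unfolding exp_ent_def by blast
      qed
      ultimately show ?thesis by blast
    qed
  qed
  show ?thesis
  proof (rule set_eqI)
    fix S
    show "S \<in> induced_prebornology (flat B) (restrict_coarse (flat B) (exp_coarse X C))
       \<longleftrightarrow> S \<in> {S. S \<subseteq> flat B \<and> (S = {} \<or> \<Union>S \<in> B)}"
    proof (cases "S \<subseteq> flat B")
      case True
      then show ?thesis unfolding induced_prebornology_def using eq[OF True] main[OF True] by simp
    next
      case False
      then show ?thesis unfolding induced_prebornology_def by simp
    qed
  qed
qed

theorem mainTheorem19:
  fixes X :: "'a set" and B :: "'a set set"
    and C1 C2 :: "('a \<times> 'a) set set"
  assumes "prebornology X B"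
    and "coarse_structure X C1" and "coarse_structure X C2"
    and "induced_prebornology X C1 = B" and "induced_prebornology X C2 = B"
  shows "induced_prebornology (flat B) (restrict_coarse (flat B) (exp_coarse X C1))
       = induced_prebornology (flat B) (restrict_coarse (flat B) (exp_coarse X C2))"
  using key[OF assms(1,2,4)] key[OF assms(1,3,5)] by simp

end
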